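(* Let $a<b$, $\alpha,\beta\in(0,1)$, $y_b\in\mathbb R$, $F\in C^1([a,b]\times\mathbb R^2;\mathbb R)$, and $$\mathcal J(y)={}_aI_b^\alpha\big[t\mapsto F(t,y(t),{}^C_aD_t^\beta[y](t))\big](b).$$ Let $y\in C^1([a,b])$, with ${}^C_aD_t^\beta[y]$ continuous on $[a,b]$ and $y(b)=y_b$, be a minimizer of $\mathcal J$ among all such functions ($y(a)$ free). Write $[y](t)=(t,y(t),{}^C_aD_t^\beta[y](t))$ and $g(t)=(b-t)^{\alpha-1}\partial_3F([y](t))$, and assume: $t\mapsto(b-t)^{\alpha-1}\partial_2F([y](t))$ and ${}_tD_b^\beta[g]$ are continuous on $(a,b)$; ${}_tI_b^{1-\beta}[g]$ is absolutely continuous on $[a,b]$; and either the kernel $(t,\tau)\mapsto(t-\tau)^{-\beta}/\Gamma(1-\beta)$ is square integrable on $\{a\le\tau<t\le b\}$ and $g\in L_2([a,b])$, or $g$ is continuous on $[a,b]$. Then for all $t\in(a,b)$, $$(b-t)^{\alpha-1}\partial_2F([y](t))+{}_tD_b^\beta\big[\tau\mapsto(b-\tau)^{\alpha-1}\partial_3F([y](\tau))\big](t)=0,$$ and the natural boundary condition $${}_tI_b^{1-\beta}\big[\tau\mapsto(b-\tau)^{\alpha-1}\partial_3F([y](\tau))\big](a)=0$$ holds, i.e. $\int_a^b(\tau-a)^{-\beta}(b-\tau)^{\alpha-1}\partial_3F([y](\tau))\,d\tau=0$.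
   Context: $\partial_iF$ denotes the partial derivative of $F$ in its $i$-th argument. For $\mu\in(0,1)$: ${}_aI_t^\mu[f](t)=\frac1{\Gamma(\mu)}\int_a^t(t-\tau)^{\mu-1}f(\tau)d\tau$, ${}_tI_b^\mu[f](t)=\frac1{\Gamma(\mu)}\int_t^b(\tau-t)^{\mu-1}f(\tau)d\tau$, ${}_tD_b^\mu[f](t)=-\frac{d}{dt}{}_tI_b^{1-\mu}[f](t)$, ${}^C_aD_t^\mu[f](t)={}_aI_t^{1-\mu}[f'](t)$. ${}_aI_b^\alpha[h](b)$ means $\frac1{\Gamma(\alpha)}\int_a^b(b-t)^{\alpha-1}h(t)dt$. *)

theory Defs
  imports "HOL-Analysis.Analysis"
begin

definition lRLI :: "real \<Rightarrow> real \<Rightarrow> (real \<Rightarrow> real) \<Rightarrow> real \<Rightarrow> real" where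
  "lRLI a mu f t = (1 / Gamma mu) * integral {a..t} (\<lambda>\<tau>. (t - \<tau>) powr (mu - 1) * f \<tau>)"

definition rRLI :: "real \<Rightarrow> real \<Rightarrow> (real \<Rightarrow> real) \<Rightarrow> real \<Rightarrow> real" where
  "rRLI b mu f t = (1 / Gamma mu) * integral {t..b} (\<lambda>\<tau>. (\<tau> - t) powr (mu - 1) * f \<tau>)"

definition rRLD :: "real \<Rightarrow> real \<Rightarrow> (real \<Rightarrow> real) \<Rightarrow> real \<Rightarrow> real" where
  "rRLD b mu f t = - deriv (rRLI b (1 - mu) f) t"

definition caputo :: "real \<Rightarrow> real \<Rightarrow> real \<Rightarrow> (real \<Rightarrow> real) \<Rightarrow> real \<Rightarrow> real" where
  "caputo a b mu y t = lRLI a (1 - mu) (\<lambda>\<tau>. vector_derivative y (at \<tau> within {a..b})) t"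

definition C1_on :: "real \<Rightarrow> real \<Rightarrow> (real \<Rightarrow> real) \<Rightarrow> bool" where
  "C1_on a b y \<longleftrightarrow> (\<exists>y'. continuous_on {a..b} y' \<and>
      (\<forall>t\<in>{a..b}. (y has_real_derivative y' t) (at t within {a..b})))"

definition abs_continuous_on :: "real \<Rightarrow> real \<Rightarrow> (real \<Rightarrow> real) \<Rightarrow> bool" where
  "abs_continuous_on a b f \<longleftrightarrow>
    (\<forall>e>0. \<exists>d>0. \<forall>(n::nat) (s::nat \<Rightarrow> real) (t::nat \<Rightarrow> real).
       (\<forall>i<n. a \<le> s i \<and> s i \<le> t i \<and> t i \<le> b) \<and>
       (\<forall>i<n. \<forall>j<n. i \<noteq> j \<longrightarrow> t i \<le> s j \<or> t j \<le> s i) \<and>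
       (\<Sum>i<n. t i - s i) < d
       \<longrightarrow> (\<Sum>i<n. \<bar>f (t i) - f (s i)\<bar>) < e)"

definition Jfun :: "real \<Rightarrow> real \<Rightarrow> real \<Rightarrow> real \<Rightarrow> (real \<Rightarrow> real \<Rightarrow> real \<Rightarrow> real)
    \<Rightarrow> (real \<Rightarrow> real) \<Rightarrow> real" where
  "Jfun a b alpha beta F y = lRLI a alpha (\<lambda>t. F t (y t) (caputo a b beta y t)) b"

definition admissible :: "real \<Rightarrow> real \<Rightarrow> real \<Rightarrow> real \<Rightarrow> (real \<Rightarrow> real) \<Rightarrow> bool" where
  "admissible a b beta yb y \<longleftrightarrow>
     C1_on a b y \<and> continuous_on {a..b} (caputo a b beta y) \<and> y b = yb"

end

theory Submission
  imports Defs
begin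

lemma kern_left_has_int:
  fixes a t e :: real
  assumes "a \<le> t" "e > -1"
  shows "((\<lambda>\<tau>. (t - \<tau>) powr e) has_integral ((t - a) powr (e + 1) / (e + 1))) {a..t}"
proof -
  have "((\<lambda>\<tau>. (t - \<tau>) powr e) has_integral
     ((\<lambda>\<tau>. - ((t - \<tau>) powr (e + 1) / (e + 1))) t - (\<lambda>\<tau>. - ((t - \<tau>) powr (e + 1) / (e + 1))) a)) {a..t}"
  proof (rule fundamental_theorem_of_calculus_interior)
    show "continuous_on {a..t} (\<lambda>\<tau>. - ((t - \<tau>) powr (e + 1) / (e + 1)))"
      using assms by (intro continuous_intros continuous_on_powr') auto
    fix x assume x: "x \<in> {a<..<t}"
    show "((\<lambda>\<tau>. - ((t - \<tau>) powr (e + 1) / (e + 1))) has_vector_derivative (t - x) powr e) (at x)"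
      unfolding has_real_derivative_iff_has_vector_derivative[symmetric]
      using x assms by (auto intro!: derivative_eq_intros)
  qed (use assms in auto)
  then show ?thesis by simp
qed

lemma kern_right_has_int:
  fixes a t e :: real
  assumes "a \<le> t" "e > -1"
  shows "((\<lambda>\<tau>. (\<tau> - a) powr e) has_integral ((t - a) powr (e + 1) / (e + 1))) {a..t}"
proof -
  have "((\<lambda>\<tau>. (\<tau> - a) powr e) has_integral
     ((\<lambda>\<tau>. ((\<tau> - a) powr (e + 1) / (e + 1))) t - (\<lambda>\<tau>. ((\<tau> - a) powr (e + 1) / (e + 1))) a)) {a..t}"
  proof (rule fundamental_theorem_of_calculus_interior)
    show "continuous_on {a..t} (\<lambda>\<tau>. ((\<tau> - a) powr (e + 1) / (e + 1)))"
      using assms by (intro continuous_intros continuous_on_powr') auto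
    fix x assume x: "x \<in> {a<..<t}"
    show "((\<lambda>\<tau>. ((\<tau> - a) powr (e + 1) / (e + 1))) has_vector_derivative (x - a) powr e) (at x)"
      unfolding has_real_derivative_iff_has_vector_derivative[symmetric]
      using x assms by (auto intro!: derivative_eq_intros)
  qed (use assms in auto)
  then show ?thesis by simp
qed

lemma abs_int_bounded_cont:
  fixes c k :: "real \<Rightarrow> real"
  assumes "continuous_on {a..t} c" "k absolutely_integrable_on {a..t}"
  shows "(\<lambda>\<tau>. k \<tau> * c \<tau>) absolutely_integrable_on {a..t}"
proof -
  have "(\<lambda>\<tau>. c \<tau> * k \<tau>) absolutely_integrable_on {a..t}"
  proof (rule absolutely_integrable_bounded_measurable_product_real)
    show "c \<in> borel_measurable (lebesgue_on {a..t})"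
      by (rule continuous_imp_measurable_on_sets_lebesgue) (use assms in auto)
    show "bounded (c ` {a..t})"
      by (intro compact_imp_bounded compact_continuous_image assms) auto
  qed (use assms in auto)
  then show ?thesis by (simp add: mult.commute)
qed

lemma kern_left_abs:
  fixes a t e :: real
  assumes "a \<le> t" "e > -1"
  shows "(\<lambda>\<tau>. (t - \<tau>) powr e) absolutely_integrable_on {a..t}"
  using kern_left_has_int[OF assms] by (subst absolutely_integrable_on_iff_nonneg) (auto simp: integrable_on_def)

lemma kern_right_abs:
  fixes a t e :: real
  assumes "a \<le> t" "e > -1"
  shows "(\<lambda>\<tau>. (\<tau> - a) powr e) absolutely_integrable_on {a..t}"
  using kern_right_has_int[OF assms] by (subst absolutely_integrable_on_iff_nonneg) (auto simp: integrable_on_def)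

lemma kern_left_cont_abs:
  fixes a t e :: real
  assumes "a \<le> t" "e > -1" "continuous_on {a..t} c"
  shows "(\<lambda>\<tau>. (t - \<tau>) powr e * c \<tau>) absolutely_integrable_on {a..t}"
  by (rule abs_int_bounded_cont[OF assms(3) kern_left_abs[OF assms(1,2)]])

lemma kern_right_cont_abs:
  fixes a t e :: real
  assumes "a \<le> t" "e > -1" "continuous_on {a..t} c"
  shows "(\<lambda>\<tau>. (\<tau> - a) powr e * c \<tau>) absolutely_integrable_on {a..t}"
  by (rule abs_int_bounded_cont[OF assms(3) kern_right_abs[OF assms(1,2)]])

lemma fubini_frac:
  fixes a b beta :: real and u h :: "real \<Rightarrow> real"
  assumes ab: "a \<le> b" and beta: "0 < beta" "beta < 1"
    and u: "set_integrable lborel {a..b} u" and h: "continuous_on {a..b} h"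
  shows "integral {a..b} (\<lambda>t. u t * integral {a..t} (\<lambda>\<tau>. (t - \<tau>) powr (- beta) * h \<tau>))
       = integral {a..b} (\<lambda>\<tau>. h \<tau> * integral {\<tau>..b} (\<lambda>t. (t - \<tau>) powr (- beta) * u t))"
proof -
  define U where "U t = indicator {a..b} t * u t" for t
  define H where "H \<tau> = indicator {a..b} \<tau> * h \<tau>" for \<tau>
  define K where "K t \<tau> = (if \<tau> \<le> t then (t - \<tau>) powr (- beta) else 0)" for t \<tau> :: real
  define f where "f t \<tau> = U t * (H \<tau> * K t \<tau>)" for t \<tau>
  have U_meas[measurable]: "U \<in> borel_measurable borel"
    using borel_measurable_integrable[OF u[unfolded set_integrable_def]] unfolding U_def[abs_def] by simp
  have H_meas[measurable]: "H \<in> borel_measurable borel"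
    using borel_measurable_continuous_on_indicator[OF _ h] unfolding H_def[abs_def] by simp
  have K_meas[measurable]: "case_prod K \<in> borel_measurable (lborel \<Otimes>\<^sub>M lborel)"
    unfolding K_def by measurable
  have f_meas[measurable]: "case_prod f \<in> borel_measurable (lborel \<Otimes>\<^sub>M lborel)"
    unfolding f_def by measurable
  obtain Hm where Hm: "\<And>\<tau>. \<tau> \<in> {a..b} \<Longrightarrow> \<bar>h \<tau>\<bar> \<le> Hm" "Hm \<ge> 0"
  proof -
    have "bounded (h ` {a..b})"
      by (intro compact_imp_bounded compact_continuous_image h) auto
    then obtain B where "\<forall>x\<in>h ` {a..b}. norm x \<le> B" by (auto simp: bounded_iff)
    then show ?thesis using that[of "max B 0"] by force
  qed

  define C where "C = Hm * (b - a) powr (1 - beta) / (1 - beta)"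
  have fib: "(\<lambda>\<tau>. H \<tau> * K t \<tau>) = (\<lambda>\<tau>. indicator {a..t} \<tau> *\<^sub>R ((t - \<tau>) powr (- beta) * h \<tau>))"
    if t: "t \<in> {a..b}" for t
    using t by (auto simp: H_def K_def indicator_def fun_eq_iff)
  have fib_int: "set_integrable lborel {a..t} (\<lambda>\<tau>. (t - \<tau>) powr (- beta) * h \<tau>)"
    if t: "t \<in> {a..b}" for t
  proof -
    have "(\<lambda>\<tau>. (t - \<tau>) powr (- beta) * h \<tau>) absolutely_integrable_on {a..t}"
      by (rule kern_left_cont_abs) (use t beta in \<open>auto intro: continuous_on_subset[OF h]\<close>)
    moreover have "(\<lambda>\<tau>. indicator {a..t} \<tau> *\<^sub>R ((t - \<tau>) powr (- beta) * h \<tau>)) \<in> borel_measurable lborel"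
      unfolding fib[OF t, symmetric] by measurable
    ultimately show ?thesis
      unfolding set_integrable_def by (subst (asm) integrable_completion) auto
  qed
  have fib_int': "integrable lborel (\<lambda>\<tau>. H \<tau> * K t \<tau>)" if t: "t \<in> {a..b}" for t
    using fib_int[OF t] unfolding fib[OF t] set_integrable_def .
  have fib_val: "(\<integral>\<tau>. H \<tau> * K t \<tau> \<partial>lborel) = integral {a..t} (\<lambda>\<tau>. (t - \<tau>) powr (- beta) * h \<tau>)"
    if t: "t \<in> {a..b}" for t
    using set_borel_integral_eq_integral(2)[OF fib_int[OF t]]
    unfolding fib[OF t] set_lebesgue_integral_def .
  have fib_norm: "(\<integral>\<tau>. norm (H \<tau> * K t \<tau>) \<partial>lborel) \<le> C" if t: "t \<in> {a..b}" for t
  proof -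
    have si: "set_integrable lborel {a..t} (\<lambda>\<tau>. norm ((t - \<tau>) powr (- beta) * h \<tau>))"
      using fib_int[OF t] by (rule set_integrable_norm)
    have "(\<integral>\<tau>. norm (H \<tau> * K t \<tau>) \<partial>lborel) = (LINT \<tau>:{a..t}|lborel. norm ((t - \<tau>) powr (- beta) * h \<tau>))"
      unfolding set_lebesgue_integral_def
      by (rule Bochner_Integration.integral_cong) (auto simp: fun_cong[OF fib[OF t]] indicator_def)
    also have "\<dots> = integral {a..t} (\<lambda>\<tau>. norm ((t - \<tau>) powr (- beta) * h \<tau>))"
      by (rule set_borel_integral_eq_integral(2)[OF si])
    also have "\<dots> \<le> integral {a..t} (\<lambda>\<tau>. Hm * (t - \<tau>) powr (- beta))"
    proof (rule integral_le)
      show "(\<lambda>\<tau>. norm ((t - \<tau>) powr (- beta) * h \<tau>)) integrable_on {a..t}"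
        by (rule set_borel_integral_eq_integral(1)[OF si])
      show "(\<lambda>\<tau>. Hm * (t - \<tau>) powr (- beta)) integrable_on {a..t}"
        using has_integral_mult_right[OF kern_left_has_int[of a t "- beta"], of Hm] t beta by (auto simp: integrable_on_def)
      fix x assume x: "x \<in> {a..t}"
      then have "\<bar>h x\<bar> \<le> Hm" using t Hm by auto
      then show "norm ((t - x) powr (- beta) * h x) \<le> Hm * (t - x) powr (- beta)"
        by (auto simp: abs_mult mult.commute intro: mult_right_mono)
    qed
    also have "\<dots> = Hm * ((t - a) powr (1 - beta) / (1 - beta))"
      using has_integral_cmul[OF kern_left_has_int[of a t "- beta"], of Hm] t beta
      by (auto dest!: integral_unique)
    also have "\<dots> \<le> C"
      unfolding C_def using t beta Hm(2)
      by (auto intro!: mult_left_mono divide_right_mono powr_mono2)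
    finally show ?thesis .
  qed

  have U_int: "integrable lborel U"
    using u unfolding set_integrable_def U_def by simp
  have int_prod: "integrable (lborel \<Otimes>\<^sub>M lborel) (case_prod f)"
  proof (rule lborel_pair.Fubini_integrable)
    show "integrable lborel (\<lambda>t. \<integral>\<tau>. norm (case_prod f (t, \<tau>)) \<partial>lborel)"
    proof (rule Bochner_Integration.integrable_bound)
      show "integrable lborel (\<lambda>t. C * norm (U t))"
        using U_int by auto
      show "(\<lambda>t. \<integral>\<tau>. norm (case_prod f (t, \<tau>)) \<partial>lborel) \<in> borel_measurable lborel"
      proof -
        have *: "(\<lambda>(t, \<tau>). norm (f t \<tau>)) \<in> borel_measurable (lborel \<Otimes>\<^sub>M lborel)"
          using measurable_compose[OF f_meas borel_measurable_norm] by (simp add: case_prod_beta' comp_def)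
        show ?thesis
          using lborel.borel_measurable_lebesgue_integral[OF *] by simp
      qed
      show "AE t in lborel. norm (\<integral>\<tau>. norm (case_prod f (t, \<tau>)) \<partial>lborel) \<le> norm (C * norm (U t))"
      proof (rule AE_I2)
        fix t :: real
        show "norm (\<integral>\<tau>. norm (case_prod f (t, \<tau>)) \<partial>lborel) \<le> norm (C * norm (U t))"
        proof (cases "t \<in> {a..b}")
          case True
          have C0: "C \<ge> 0" unfolding C_def using Hm(2) beta by auto
          have I0: "0 \<le> (\<integral>\<tau>. norm (case_prod f (t, \<tau>)) \<partial>lborel)"
            by (rule integral_nonneg_AE) auto
          have "(\<integral>\<tau>. norm (case_prod f (t, \<tau>)) \<partial>lborel) = \<bar>U t\<bar> * (\<integral>\<tau>. norm (H \<tau> * K t \<tau>) \<partial>lborel)"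
            by (simp add: f_def abs_mult)
          also have "\<dots> \<le> \<bar>U t\<bar> * C"
            by (rule mult_left_mono[OF fib_norm[OF True]]) simp
          finally show ?thesis
            using C0 I0 by (simp add: abs_mult mult.commute)
        next
          case False
          then show ?thesis by (simp add: f_def U_def)
        qed
      qed
    qed
    show "AE t in lborel. integrable lborel (\<lambda>\<tau>. case_prod f (t, \<tau>))"
    proof (rule AE_I2)
      fix t :: real
      show "integrable lborel (\<lambda>\<tau>. case_prod f (t, \<tau>))"
      proof (cases "t \<in> {a..b}")
        case True
        then show ?thesis using fib_int'[OF True] by (simp add: f_def)
      next
        case False
        then show ?thesis by (simp add: f_def U_def)
      qed
    qed
  qed (rule f_meas)

  note FUB = lborel_pair.Fubini_integral[OF int_prod]
  define L where "L t = u t * integral {a..t} (\<lambda>\<tau>. (t - \<tau>) powr (- beta) * h \<tau>)" for t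
  have inner1: "(\<integral>\<tau>. f t \<tau> \<partial>lborel) = indicator {a..b} t *\<^sub>R L t" for t
  proof (cases "t \<in> {a..b}")
    case True
    have "(\<integral>\<tau>. f t \<tau> \<partial>lborel) = U t * (\<integral>\<tau>. H \<tau> * K t \<tau> \<partial>lborel)"
      by (simp add: f_def)
    then show ?thesis using True by (simp add: fib_val U_def L_def)
  next
    case False
    then show ?thesis by (simp add: f_def U_def)
  qed
  have intL: "set_integrable lborel {a..b} L"
    using lborel_pair.integrable_fst[OF int_prod] unfolding set_integrable_def inner1 .
  have LHS: "(\<integral>t. \<integral>\<tau>. f t \<tau> \<partial>lborel \<partial>lborel) = integral {a..b} L"
    using set_borel_integral_eq_integral(2)[OF intL] unfolding inner1 set_lebesgue_integral_def .
  define R where "R \<tau> = h \<tau> * integral {\<tau>..b} (\<lambda>t. (t - \<tau>) powr (- beta) * u t)" for \<tau>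
  have inner2: "AE \<tau> in lborel. (\<integral>t. f t \<tau> \<partial>lborel) = indicator {a..b} \<tau> *\<^sub>R R \<tau>"
    using lborel_pair.AE_integrable_snd[OF int_prod]
  proof eventually_elim
    case (elim \<tau>)
    show ?case
    proof (cases "\<tau> \<in> {a..b} \<and> h \<tau> \<noteq> 0")
      case True
      have fib2: "(\<lambda>t. U t * K t \<tau>) = (\<lambda>t. indicator {\<tau>..b} t *\<^sub>R ((t - \<tau>) powr (- beta) * u t))"
        using True by (auto simp: U_def K_def indicator_def fun_eq_iff)
      have eq: "(\<lambda>t. f t \<tau>) = (\<lambda>t. H \<tau> * (U t * K t \<tau>))"
        by (simp add: f_def fun_eq_iff mult_ac)
      have Hne: "H \<tau> \<noteq> 0" using True by (simp add: H_def)
      have "integrable lborel (\<lambda>t. U t * K t \<tau>)"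
        using elim Hne unfolding eq by simp
      then have si: "set_integrable lborel {\<tau>..b} (\<lambda>t. (t - \<tau>) powr (- beta) * u t)"
        unfolding fib2 set_integrable_def .
      have "(\<integral>t. f t \<tau> \<partial>lborel) = H \<tau> * (\<integral>t. U t * K t \<tau> \<partial>lborel)"
        unfolding eq by simp
      also have "(\<integral>t. U t * K t \<tau> \<partial>lborel) = integral {\<tau>..b} (\<lambda>t. (t - \<tau>) powr (- beta) * u t)"
        using set_borel_integral_eq_integral(2)[OF si] unfolding fib2 set_lebesgue_integral_def .
      finally show ?thesis using True by (simp add: H_def R_def)
    next
      case False
      then show ?thesis by (auto simp: f_def H_def R_def)
    qed
  qed
  have g0_meas: "(\<lambda>\<tau>. \<integral>t. f t \<tau> \<partial>lborel) \<in> borel_measurable lborel"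
    using lborel_pair.integrable_snd[OF int_prod] by (rule borel_measurable_integrable)
  have g0_int: "integrable lborel (\<lambda>\<tau>. \<integral>t. f t \<tau> \<partial>lborel)"
    by (rule lborel_pair.integrable_snd[OF int_prod])
  have g0_int': "integrable lebesgue (\<lambda>\<tau>. \<integral>t. f t \<tau> \<partial>lborel)"
    using g0_int g0_meas by (subst integrable_completion) auto
  have ae': "AE \<tau> in lebesgue. (\<integral>t. f t \<tau> \<partial>lborel) = indicator {a..b} \<tau> *\<^sub>R R \<tau>"
    by (rule AE_completion[OF inner2])
  have g1_meas: "(\<lambda>\<tau>. indicator {a..b} \<tau> *\<^sub>R R \<tau>) \<in> borel_measurable lebesgue"
    by (rule borel_measurable_AE[OF _ ae']) (use g0_meas in \<open>auto intro: measurable_completion\<close>)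
  have g0_meas': "(\<lambda>\<tau>. \<integral>t. f t \<tau> \<partial>lborel) \<in> borel_measurable lebesgue"
    using g0_meas by (auto intro: measurable_completion)
  have intR: "set_integrable lebesgue {a..b} R"
    unfolding set_integrable_def
    using integrable_cong_AE_imp[OF g0_int' g1_meas ae'] .
  have "(\<integral>\<tau>. \<integral>t. f t \<tau> \<partial>lborel \<partial>lborel) = (\<integral>\<tau>. \<integral>t. f t \<tau> \<partial>lborel \<partial>lebesgue)"
    using g0_meas by (simp add: integral_completion)
  also have "\<dots> = (\<integral>\<tau>. indicator {a..b} \<tau> *\<^sub>R R \<tau> \<partial>lebesgue)"
    by (rule integral_cong_AE[OF g0_meas' g1_meas ae'])
  also have "\<dots> = integral {a..b} R"
    using set_lebesgue_integral_eq_integral(2)[OF intR] unfolding set_lebesgue_integral_def .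
  finally have RHS: "(\<integral>\<tau>. \<integral>t. f t \<tau> \<partial>lborel \<partial>lborel) = integral {a..b} R" .
  have "integral {a..b} L = integral {a..b} R" using FUB LHS RHS by simp
  then show ?thesis unfolding L_def R_def .
qed

lemma frac_int_holder:
  fixes a t1 t2 beta M :: real and h :: "real \<Rightarrow> real"
  assumes t: "a \<le> t1" "t1 \<le> t2" and beta: "0 < beta" "beta < 1"
    and h: "continuous_on {a..t2} h" and M: "\<And>\<tau>. \<tau> \<in> {a..t2} \<Longrightarrow> \<bar>h \<tau>\<bar> \<le> M"
  shows "\<bar>integral {a..t2} (\<lambda>\<tau>. (t2 - \<tau>) powr (- beta) * h \<tau>)
          - integral {a..t1} (\<lambda>\<tau>. (t1 - \<tau>) powr (- beta) * h \<tau>)\<bar>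
         \<le> 2 * M * (t2 - t1) powr (1 - beta) / (1 - beta)"
proof -
  define k1 where "k1 \<tau> = (t1 - \<tau>) powr (- beta)" for \<tau>
  define k2 where "k2 \<tau> = (t2 - \<tau>) powr (- beta)" for \<tau>
  have M0: "M \<ge> 0" using M[of a] t by auto
  have e: "- beta > -1" using beta by simp
  have hk2: "(\<lambda>\<tau>. k2 \<tau> * h \<tau>) integrable_on {a..t2}"
    unfolding k2_def using kern_left_cont_abs[OF _ e h] t by (auto dest: set_lebesgue_integral_eq_integral(1))
  have hk1: "(\<lambda>\<tau>. k1 \<tau> * h \<tau>) integrable_on {a..t1}"
    unfolding k1_def using kern_left_cont_abs[OF _ e continuous_on_subset[OF h]] t
    by (auto dest: set_lebesgue_integral_eq_integral(1))
  have hk2a: "(\<lambda>\<tau>. k2 \<tau> * h \<tau>) integrable_on {a..t1}"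
    by (rule integrable_on_subinterval[OF hk2]) (use t in auto)
  have hk2b: "(\<lambda>\<tau>. k2 \<tau> * h \<tau>) integrable_on {t1..t2}"
    by (rule integrable_on_subinterval[OF hk2]) (use t in auto)
  have split: "integral {a..t2} (\<lambda>\<tau>. k2 \<tau> * h \<tau>) = integral {a..t1} (\<lambda>\<tau>. k2 \<tau> * h \<tau>) + integral {t1..t2} (\<lambda>\<tau>. k2 \<tau> * h \<tau>)"
    using Henstock_Kurzweil_Integration.integral_combine[OF t hk2] by simp
  have K2: "(k2 has_integral (t2 - a) powr (1 - beta) / (1 - beta)) {a..t2}"
    unfolding k2_def using kern_left_has_int[of a t2 "- beta"] t beta by simp
  have K2b: "(k2 has_integral (t2 - t1) powr (1 - beta) / (1 - beta)) {t1..t2}"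
    unfolding k2_def using kern_left_has_int[of t1 t2 "- beta"] t beta by simp
  have K1: "(k1 has_integral (t1 - a) powr (1 - beta) / (1 - beta)) {a..t1}"
    unfolding k1_def using kern_left_has_int[of a t1 "- beta"] t beta by simp
  have K2a_int: "k2 integrable_on {a..t1}"
    by (rule integrable_on_subinterval[OF has_integral_integrable[OF K2]]) (use t in auto)
  have K2a: "integral {a..t1} k2 = ((t2 - a) powr (1 - beta) - (t2 - t1) powr (1 - beta)) / (1 - beta)"
  proof -
    have "integral {a..t2} k2 = integral {a..t1} k2 + integral {t1..t2} k2"
      using Henstock_Kurzweil_Integration.integral_combine[OF t has_integral_integrable[OF K2]] by simp
    then show ?thesis using integral_unique[OF K2] integral_unique[OF K2b] by (simp add: diff_divide_distrib)
  qed
  have P1: "\<bar>integral {a..t1} (\<lambda>\<tau>. k2 \<tau> * h \<tau>) - integral {a..t1} (\<lambda>\<tau>. k1 \<tau> * h \<tau>)\<bar>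
      \<le> M * (t2 - t1) powr (1 - beta) / (1 - beta)"
  proof -
    have "integral {a..t1} (\<lambda>\<tau>. k2 \<tau> * h \<tau>) - integral {a..t1} (\<lambda>\<tau>. k1 \<tau> * h \<tau>)
        = integral {a..t1} (\<lambda>\<tau>. (k2 \<tau> - k1 \<tau>) * h \<tau>)"
      using integral_diff[OF hk2a hk1] by (simp add: algebra_simps)
    also have "\<bar>\<dots>\<bar> \<le> integral {a..t1} (\<lambda>\<tau>. M * \<bar>k1 \<tau> - k2 \<tau>\<bar>)"
    proof -
      have ii: "(\<lambda>\<tau>. (k2 \<tau> - k1 \<tau>) * h \<tau>) integrable_on {a..t1}"
        using integrable_diff[OF hk2a hk1] by (simp add: algebra_simps)
      have jj: "(\<lambda>\<tau>. M * \<bar>k1 \<tau> - k2 \<tau>\<bar>) integrable_on {a..t1}"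
      proof -
        have a1: "k1 absolutely_integrable_on {a..t1}"
          unfolding k1_def using kern_left_abs[OF t(1) e] .
        have a2: "k2 absolutely_integrable_on {a..t1}"
          using K2a_int by (subst absolutely_integrable_on_iff_nonneg) (auto simp: k2_def)
        have "(\<lambda>\<tau>. k1 \<tau> - k2 \<tau>) absolutely_integrable_on {a..t1}"
          by (rule set_integral_diff(1)[OF a1 a2])
        then have "(\<lambda>\<tau>. \<bar>k1 \<tau> - k2 \<tau>\<bar>) absolutely_integrable_on {a..t1}"
          by (rule set_integrable_abs)
        then have "(\<lambda>\<tau>. \<bar>k1 \<tau> - k2 \<tau>\<bar>) integrable_on {a..t1}"
          by (rule set_lebesgue_integral_eq_integral(1))
        then show ?thesis using integrable_on_cmult_left[of _ _ M] by (metis of_real_eq_id id_apply)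
      qed
      have "norm ((k2 x - k1 x) * h x) \<le> M * \<bar>k1 x - k2 x\<bar>" if "x \<in> {a..t1}" for x
      proof -
        have "\<bar>h x\<bar> \<le> M" using M that t by auto
        then show ?thesis by (simp add: abs_mult abs_minus_commute mult.commute mult_right_mono)
      qed
      then show ?thesis
        using integral_norm_bound_integral[OF ii jj] by simp
    qed
    also have "\<dots> = M * integral {a..t1} (\<lambda>\<tau>. k1 \<tau> - k2 \<tau>)"
    proof -
      have "integral {a..t1} (\<lambda>\<tau>. \<bar>k1 \<tau> - k2 \<tau>\<bar>) = integral {a..t1} (\<lambda>\<tau>. k1 \<tau> - k2 \<tau>)"
      proof (rule integral_spike[of "{t1}"])
        fix x assume x: "x \<in> {a..t1} - {t1}"
        then have "k2 x \<le> k1 x" unfolding k1_def k2_def using t beta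
          by (auto intro!: powr_mono2')
        then show "k1 x - k2 x = \<bar>k1 x - k2 x\<bar>" by simp
      qed auto
      then show ?thesis by simp
    qed
    also have "integral {a..t1} (\<lambda>\<tau>. k1 \<tau> - k2 \<tau>) = integral {a..t1} k1 - integral {a..t1} k2"
      by (rule integral_diff[OF has_integral_integrable[OF K1] K2a_int])
    also have "\<dots> \<le> (t2 - t1) powr (1 - beta) / (1 - beta)"
    proof -
      have "(t1 - a) powr (1 - beta) \<le> (t2 - a) powr (1 - beta)"
        using t beta by (intro powr_mono2) auto
      then show ?thesis
        using integral_unique[OF K1] K2a beta by (simp add: divide_simps left_diff_distrib)
    qed
    finally show ?thesis using M0 by (simp add: mult_left_mono)
  qed
  have P2: "\<bar>integral {t1..t2} (\<lambda>\<tau>. k2 \<tau> * h \<tau>)\<bar> \<le> M * (t2 - t1) powr (1 - beta) / (1 - beta)"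
  proof -
    have "\<bar>integral {t1..t2} (\<lambda>\<tau>. k2 \<tau> * h \<tau>)\<bar> \<le> integral {t1..t2} (\<lambda>\<tau>. M * k2 \<tau>)"
    proof -
      have jj: "(\<lambda>\<tau>. M * k2 \<tau>) integrable_on {t1..t2}"
        using integrable_on_cmult_left[OF has_integral_integrable[OF K2b], of M] by simp
      have "norm (k2 x * h x) \<le> M * k2 x" if "x \<in> {t1..t2}" for x
      proof -
        have "\<bar>h x\<bar> \<le> M" using M that t by auto
        then show ?thesis by (simp add: abs_mult k2_def mult.commute mult_right_mono)
      qed
      then show ?thesis
        using integral_norm_bound_integral[OF hk2b jj] by simp
    qed
    also have "\<dots> = M * (t2 - t1) powr (1 - beta) / (1 - beta)"
      using integral_unique[OF has_integral_mult_right[OF K2b, of M]] by simp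
    finally show ?thesis .
  qed
  have "integral {a..t2} (\<lambda>\<tau>. (t2 - \<tau>) powr (- beta) * h \<tau>)
          - integral {a..t1} (\<lambda>\<tau>. (t1 - \<tau>) powr (- beta) * h \<tau>)
      = (integral {a..t1} (\<lambda>\<tau>. k2 \<tau> * h \<tau>) - integral {a..t1} (\<lambda>\<tau>. k1 \<tau> * h \<tau>))
        + integral {t1..t2} (\<lambda>\<tau>. k2 \<tau> * h \<tau>)"
    using split unfolding k1_def k2_def by simp
  then show ?thesis using P1 P2 by (simp add: abs_triangle_ineq add_mono order_trans[OF abs_triangle_ineq])
qed

lemma frac_int_cont:
  fixes a b beta :: real and h :: "real \<Rightarrow> real"
  assumes ab: "a \<le> b" and beta: "0 < beta" "beta < 1" and h: "continuous_on {a..b} h"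
  shows "continuous_on {a..b} (\<lambda>t. integral {a..t} (\<lambda>\<tau>. (t - \<tau>) powr (- beta) * h \<tau>))"
proof -
  define I where "I t = integral {a..t} (\<lambda>\<tau>. (t - \<tau>) powr (- beta) * h \<tau>)" for t
  obtain M where M: "\<And>\<tau>. \<tau> \<in> {a..b} \<Longrightarrow> \<bar>h \<tau>\<bar> \<le> M"
  proof -
    have "bounded (h ` {a..b})"
      by (intro compact_imp_bounded compact_continuous_image h) auto
    then obtain B where "\<forall>x\<in>h ` {a..b}. norm x \<le> B" by (auto simp: bounded_iff)
    then show ?thesis using that[of B] by force
  qed
  define g where "g x t = 2 * M * \<bar>t - x\<bar> powr (1 - beta) / (1 - beta)" for x t :: real
  have bound: "\<bar>I t - I x\<bar> \<le> g x t" if "t \<in> {a..b}" "x \<in> {a..b}" for t x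
  proof (cases "x \<le> t")
    case True
    have "\<bar>I t - I x\<bar> \<le> 2 * M * (t - x) powr (1 - beta) / (1 - beta)"
      unfolding I_def
      by (rule frac_int_holder) (use that True beta M in \<open>auto intro: continuous_on_subset[OF h]\<close>)
    then show ?thesis using True by (simp add: g_def)
  next
    case False
    have "\<bar>I x - I t\<bar> \<le> 2 * M * (x - t) powr (1 - beta) / (1 - beta)"
      unfolding I_def
      by (rule frac_int_holder) (use that False beta M in \<open>auto intro: continuous_on_subset[OF h]\<close>)
    then show ?thesis using False by (simp add: g_def abs_minus_commute)
  qed
  have gc: "continuous_on UNIV (g x)" for x
    unfolding g_def using beta
    by (intro continuous_intros continuous_on_powr') auto
  show ?thesis
    unfolding continuous_on_def I_def[symmetric]
  proof
    fix x assume x: "x \<in> {a..b}"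
    have "(g x \<longlongrightarrow> g x x) (at x within {a..b})"
      using gc[of x] by (meson UNIV_I continuous_on_def tendsto_within_subset subset_UNIV)
    moreover have "g x x = 0" using beta by (simp add: g_def)
    ultimately have g0: "(g x \<longlongrightarrow> 0) (at x within {a..b})" by simp
    have "((\<lambda>t. I t - I x) \<longlongrightarrow> 0) (at x within {a..b})"
      by (rule Lim_null_comparison[OF _ g0]) (use bound x in \<open>auto simp: eventually_at_filter\<close>)
    then show "(I \<longlongrightarrow> I x) (at x within {a..b})"
      by (simp add: LIM_zero_iff)
  qed
qed

lemma phi_deriv:
  fixes F F1 F2 F3 :: "real \<Rightarrow> real \<Rightarrow> real \<Rightarrow> real"
  assumes F_deriv: "\<And>t u v. t \<in> {a..b} \<Longrightarrow>
        ((\<lambda>(t, u, v). F t u v) has_derivative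
           (\<lambda>(dt, du, dv). F1 t u v * dt + F2 t u v * du + F3 t u v * dv))
        (at (t, u, v) within {a..b} \<times> UNIV)"
    and t: "t \<in> {a..b}"
  shows "((\<lambda>s. F t (y + s * e) (c + s * d)) has_real_derivative
          (F2 t (y + s * e) (c + s * d) * e + F3 t (y + s * e) (c + s * d) * d)) (at s)"
proof -
  define P where "P s = (t, y + s * e, c + s * d)" for s
  have P: "(P has_derivative (\<lambda>h. (0, h * e, h * d))) (at s within UNIV)"
    unfolding P_def by (auto intro!: derivative_eq_intros)
  have "((\<lambda>s. (\<lambda>(t, u, v). F t u v) (P s)) has_derivative
      (\<lambda>h. (\<lambda>(t, u, v). (\<lambda>(dt, du, dv). F1 t u v * dt + F2 t u v * du + F3 t u v * dv)) (P s) (0, h * e, h * d)))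
      (at s within UNIV)"
    by (rule has_derivative_in_compose2[where t = "{a..b} \<times> UNIV", OF _ _ _ P])
       (use t in \<open>auto simp: P_def intro: F_deriv\<close>)
  then have "((\<lambda>s. F t (y + s * e) (c + s * d)) has_derivative
      (\<lambda>h. F2 t (y + s * e) (c + s * d) * (h * e) + F3 t (y + s * e) (c + s * d) * (h * d))) (at s)"
    by (simp add: P_def)
  then show ?thesis
    unfolding has_field_derivative_def
    by (rule has_derivative_eq_rhs) (auto simp: P_def fun_eq_iff algebra_simps)
qed

lemma w_cont_int:
  fixes a b alpha :: real and g :: "real \<Rightarrow> real"
  assumes "a \<le> b" "0 < alpha" "continuous_on {a..b} g"
  shows "(\<lambda>t. (b - t) powr (alpha - 1) * g t) integrable_on {a..b}"
  using kern_left_cont_abs[of a b "alpha - 1" g] assms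
  by (auto dest: set_lebesgue_integral_eq_integral(1))

lemma bounded_on_compactE:
  fixes f :: "'a::topological_space \<Rightarrow> real"
  assumes "compact S" "continuous_on S f"
  obtains B where "B \<ge> 0" "\<And>x. x \<in> S \<Longrightarrow> \<bar>f x\<bar> \<le> B"
proof -
  have "bounded (f ` S)"
    by (intro compact_imp_bounded compact_continuous_image assms)
  then obtain B where "\<forall>x\<in>f ` S. norm x \<le> B" by (auto simp: bounded_iff)
  then show ?thesis using that[of "max B 0"] by force
qed

lemma first_var:
  fixes a b alpha :: real and y c e d :: "real \<Rightarrow> real"
    and F F1 F2 F3 :: "real \<Rightarrow> real \<Rightarrow> real \<Rightarrow> real"
  assumes ab: "a < b" and alpha: "0 < alpha"
    and F_deriv: "\<And>t u v. t \<in> {a..b} \<Longrightarrow>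
        ((\<lambda>(t, u, v). F t u v) has_derivative
           (\<lambda>(dt, du, dv). F1 t u v * dt + F2 t u v * du + F3 t u v * dv))
        (at (t, u, v) within {a..b} \<times> UNIV)"
    and F2c: "continuous_on ({a..b} \<times> UNIV) (\<lambda>(t, u, v). F2 t u v)"
    and F3c: "continuous_on ({a..b} \<times> UNIV) (\<lambda>(t, u, v). F3 t u v)"
    and yc: "continuous_on {a..b} y" and cc: "continuous_on {a..b} c"
    and ec: "continuous_on {a..b} e" and dc: "continuous_on {a..b} d"
    and min: "\<And>\<epsilon>. \<epsilon> \<in> {-1..1} \<Longrightarrow>
      integral {a..b} (\<lambda>t. (b - t) powr (alpha - 1) * F t (y t) (c t))
      \<le> integral {a..b} (\<lambda>t. (b - t) powr (alpha - 1) * F t (y t + \<epsilon> * e t) (c t + \<epsilon> * d t))"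
  shows "integral {a..b} (\<lambda>t. (b - t) powr (alpha - 1) *
           (F2 t (y t) (c t) * e t + F3 t (y t) (c t) * d t)) = 0"
proof -
  define w where "w t = (b - t) powr (alpha - 1)" for t
  define G where "G s t = F t (y t + s * e t) (c t + s * d t)" for s t
  define Gd where "Gd s t = F2 t (y t + s * e t) (c t + s * d t) * e t + F3 t (y t + s * e t) (c t + s * d t) * d t" for s t
  define Q where "Q = (\<lambda>p::real\<times>real. (fst p, y (fst p) + snd p * e (fst p), c (fst p) + snd p * d (fst p)))"
  have fc: "continuous_on ({a..b} \<times> {-1..1}) (\<lambda>p::real\<times>real. f (fst p))"
    if "continuous_on {a..b} f" for f :: "real \<Rightarrow> real"
    by (rule continuous_on_compose2[OF that continuous_on_fst[OF continuous_on_id]]) auto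
  have Qc: "continuous_on ({a..b} \<times> {-1..1}) Q"
    unfolding Q_def
    by (intro continuous_intros fc yc cc ec dc)
  have KK: "compact (Q ` ({a..b} \<times> {-1..1}))"
    by (intro compact_continuous_image Qc compact_Times) auto
  have KKsub: "Q ` ({a..b} \<times> {-1..1}) \<subseteq> {a..b} \<times> UNIV"
    by (auto simp: Q_def)
  obtain B2 where B2: "B2 \<ge> 0" "\<And>p. p \<in> Q ` ({a..b} \<times> {-1..1}) \<Longrightarrow> \<bar>(\<lambda>(t, u, v). F2 t u v) p\<bar> \<le> B2"
    using bounded_on_compactE[OF KK continuous_on_subset[OF F2c KKsub]] by blast
  obtain B3 where B3: "B3 \<ge> 0" "\<And>p. p \<in> Q ` ({a..b} \<times> {-1..1}) \<Longrightarrow> \<bar>(\<lambda>(t, u, v). F3 t u v) p\<bar> \<le> B3"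
    using bounded_on_compactE[OF KK continuous_on_subset[OF F3c KKsub]] by blast
  obtain N1 where N1: "N1 \<ge> 0" "\<And>t. t \<in> {a..b} \<Longrightarrow> \<bar>e t\<bar> \<le> N1"
    using bounded_on_compactE[OF _ ec] by blast
  obtain N2 where N2: "N2 \<ge> 0" "\<And>t. t \<in> {a..b} \<Longrightarrow> \<bar>d t\<bar> \<le> N2"
    using bounded_on_compactE[OF _ dc] by blast
  define L where "L = B2 * N1 + B3 * N2"
  have Gd_bound: "\<bar>Gd s t\<bar> \<le> L" if "t \<in> {a..b}" "s \<in> {-1..1}" for s t
  proof -
    have mem: "(t, y t + s * e t, c t + s * d t) \<in> Q ` ({a..b} \<times> {-1..1})"
      by (rule image_eqI[of _ _ "(t, s)"]) (use that in \<open>auto simp: Q_def\<close>)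
    have "\<bar>F2 t (y t + s * e t) (c t + s * d t)\<bar> \<le> B2" "\<bar>F3 t (y t + s * e t) (c t + s * d t)\<bar> \<le> B3"
      using B2(2)[OF mem] B3(2)[OF mem] by auto
    then show ?thesis
      unfolding Gd_def L_def using N1 N2 that B2 B3
      by (intro order_trans[OF abs_triangle_ineq add_mono]) (auto simp: abs_mult intro!: mult_mono)
  qed
  have Gderiv: "((\<lambda>s. G s t) has_real_derivative Gd s t) (at s)" if "t \<in> {a..b}" for s t
    unfolding G_def Gd_def by (rule phi_deriv[OF F_deriv that])
  have Fc: "continuous_on ({a..b} \<times> UNIV) (\<lambda>(t, u, v). F t u v)"
    unfolding continuous_on_eq_continuous_within
    by (auto intro: has_derivative_continuous[OF F_deriv])
  have Gc: "continuous_on {a..b} (G s)" for s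
  proof -
    have "continuous_on {a..b} ((\<lambda>(t, u, v). F t u v) \<circ> (\<lambda>t. (t, y t + s * e t, c t + s * d t)))"
      by (rule continuous_on_compose[OF _ continuous_on_subset[OF Fc]])
         (auto intro!: continuous_intros yc cc ec dc)
    then show ?thesis by (simp add: G_def comp_def)
  qed
  have Gdc: "continuous_on {a..b} (Gd 0)"
  proof -
    have "continuous_on {a..b} ((\<lambda>(t, u, v). F2 t u v) \<circ> (\<lambda>t. (t, y t, c t)))"
      by (rule continuous_on_compose[OF _ continuous_on_subset[OF F2c]])
         (auto intro!: continuous_intros yc cc)
    moreover have "continuous_on {a..b} ((\<lambda>(t, u, v). F3 t u v) \<circ> (\<lambda>t. (t, y t, c t)))"
      by (rule continuous_on_compose[OF _ continuous_on_subset[OF F3c]])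
         (auto intro!: continuous_intros yc cc)
    ultimately show ?thesis
      unfolding Gd_def comp_def by (auto intro!: continuous_intros ec dc)
  qed
  have quot_bound: "\<bar>(G s t - G 0 t) / s\<bar> \<le> L" if "t \<in> {a..b}" "s \<in> {-1..1}" "s \<noteq> 0" for s t
  proof -
    have "norm (G s t - G 0 t) \<le> L * norm (s - 0)"
      by (rule field_differentiable_bound[where S = "{-1..1}" and f' = "\<lambda>z. Gd z t"])
         (use that Gd_bound in \<open>auto intro!: has_field_derivative_at_within[OF Gderiv]\<close>)
    then show ?thesis using that by (simp add: divide_simps abs_divide)
  qed
  have limit: "(\<lambda>n. integral {a..b} (\<lambda>t. w t * ((G (X n) t - G 0 t) / X n)))
       \<longlonglongrightarrow> integral {a..b} (\<lambda>t. w t * Gd 0 t)"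
    if X: "\<And>n. X n \<in> {-1..1} - {0}" "X \<longlonglongrightarrow> 0" for X
  proof (rule dominated_convergence(2))
    show "(\<lambda>t. w t * ((G (X n) t - G 0 t) / X n)) integrable_on {a..b}" for n
      unfolding w_def using ab alpha X(1)[of n]
      by (intro w_cont_int continuous_intros Gc) auto
    show "(\<lambda>t. L * w t) integrable_on {a..b}"
      using w_cont_int[of a b alpha "\<lambda>_. L"] ab alpha by (simp add: w_def mult.commute)
    show "norm (w t * ((G (X n) t - G 0 t) / X n)) \<le> L * w t" if "t \<in> {a..b}" for n t
    proof -
      have "w t \<ge> 0" by (simp add: w_def)
      then show ?thesis
        using mult_left_mono[OF quot_bound[of t "X n"], of "w t"] X(1)[of n] that
        by (auto simp: abs_mult mult.commute)
    qed
    show "(\<lambda>n. w t * ((G (X n) t - G 0 t) / X n)) \<longlonglongrightarrow> w t * Gd 0 t" if "t \<in> {a..b}" for t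
    proof -
      have "((\<lambda>s. (G s t - G 0 t) / (s - 0)) \<longlongrightarrow> Gd 0 t) (at 0)"
        using Gderiv[OF that, of 0] unfolding has_field_derivative_iff .
      then have "((\<lambda>s. (G s t - G 0 t) / s) \<circ> X) \<longlonglongrightarrow> Gd 0 t"
        using X unfolding tendsto_at_iff_sequentially by auto
      then show ?thesis by (intro tendsto_mult_left) (simp add: comp_def)
    qed
  qed
  have diffq: "integral {a..b} (\<lambda>t. w t * G s t) - integral {a..b} (\<lambda>t. w t * G 0 t)
       = s * integral {a..b} (\<lambda>t. w t * ((G s t - G 0 t) / s))" if "s \<noteq> 0" for s
  proof -
    have i1: "(\<lambda>t. w t * G s t) integrable_on {a..b}" for s
      unfolding w_def using ab alpha by (intro w_cont_int Gc) auto
    have "integral {a..b} (\<lambda>t. w t * G s t) - integral {a..b} (\<lambda>t. w t * G 0 t)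
        = integral {a..b} (\<lambda>t. w t * G s t - w t * G 0 t)"
      by (rule integral_diff[OF i1 i1, symmetric])
    also have "\<dots> = integral {a..b} (\<lambda>t. s * (w t * ((G s t - G 0 t) / s)))"
      by (rule Henstock_Kurzweil_Integration.integral_cong) (use that in \<open>simp add: field_simps\<close>)
    also have "\<dots> = s * integral {a..b} (\<lambda>t. w t * ((G s t - G 0 t) / s))"
      by simp
    finally show ?thesis .
  qed
  have minG: "integral {a..b} (\<lambda>t. w t * G 0 t) \<le> integral {a..b} (\<lambda>t. w t * G s t)"
    if "s \<in> {-1..1}" for s
    using min[OF that] by (simp add: w_def G_def)
  define X1 where "X1 n = 1 / (real n + 1)" for n
  define X2 where "X2 n = - 1 / (real n + 1)" for n
  have X1: "\<And>n. X1 n \<in> {-1..1} - {0}" "X1 \<longlonglongrightarrow> 0"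
  proof -
    show "\<And>n. X1 n \<in> {-1..1} - {0}" unfolding X1_def by (auto simp: divide_simps)
    show "X1 \<longlonglongrightarrow> 0" unfolding X1_def
      using LIMSEQ_inverse_real_of_nat by (simp add: inverse_eq_divide add.commute)
  qed
  have X2: "\<And>n. X2 n \<in> {-1..1} - {0}" "X2 \<longlonglongrightarrow> 0"
  proof -
    show "\<And>n. X2 n \<in> {-1..1} - {0}" unfolding X2_def by (auto simp: divide_simps)
    show "X2 \<longlonglongrightarrow> 0" unfolding X2_def
      using tendsto_minus[OF LIMSEQ_inverse_real_of_nat] by (simp add: inverse_eq_divide add.commute)
  qed
  have ge: "integral {a..b} (\<lambda>t. w t * ((G (X1 n) t - G 0 t) / X1 n)) \<ge> 0" for n
  proof -
    have "X1 n * integral {a..b} (\<lambda>t. w t * ((G (X1 n) t - G 0 t) / X1 n)) \<ge> 0"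
      using diffq[of "X1 n"] minG[of "X1 n"] X1(1)[of n] by simp
    moreover have "X1 n > 0" by (simp add: X1_def)
    ultimately show ?thesis by (simp add: zero_le_mult_iff)
  qed
  have le: "integral {a..b} (\<lambda>t. w t * ((G (X2 n) t - G 0 t) / X2 n)) \<le> 0" for n
  proof -
    have "X2 n * integral {a..b} (\<lambda>t. w t * ((G (X2 n) t - G 0 t) / X2 n)) \<ge> 0"
      using diffq[of "X2 n"] minG[of "X2 n"] X2(1)[of n] by simp
    moreover have "X2 n < 0" by (simp add: X2_def)
    ultimately show ?thesis by (metis mult_neg_pos not_le)
  qed
  have "integral {a..b} (\<lambda>t. w t * Gd 0 t) \<ge> 0"
    using LIMSEQ_le_const[OF limit[OF X1]] ge by blast
  moreover have "integral {a..b} (\<lambda>t. w t * Gd 0 t) \<le> 0"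
    using LIMSEQ_le_const2[OF limit[OF X2]] le by blast
  ultimately show ?thesis by (simp add: w_def Gd_def)
qed

lemma ibp_frac:
  fixes a b :: real and I e e' :: "real \<Rightarrow> real"
  assumes ab: "a < b" and Ic: "continuous_on {a..b} I"
    and Id: "\<And>t. t \<in> {a<..<b} \<Longrightarrow> I differentiable (at t)"
    and ed: "\<And>t. t \<in> {a..b} \<Longrightarrow> (e has_real_derivative e' t) (at t within {a..b})"
    and e'c: "continuous_on {a..b} e'" and eb: "e b = 0"
  shows "(\<lambda>t. deriv I t * e t) integrable_on {a..b}"
    "integral {a..b} (\<lambda>t. I t * e' t) = - I a * e a - integral {a..b} (\<lambda>t. deriv I t * e t)"
proof -
  have ec: "continuous_on {a..b} e"
    unfolding continuous_on_eq_continuous_within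
    using DERIV_continuous[OF ed] by blast
  have ftc: "((\<lambda>t. deriv I t * e t + I t * e' t) has_integral (I b * e b - I a * e a)) {a..b}"
  proof (rule fundamental_theorem_of_calculus_interior)
    show "continuous_on {a..b} (\<lambda>t. I t * e t)" by (intro continuous_intros Ic ec)
    fix x assume x: "x \<in> {a<..<b}"
    have "(I has_real_derivative deriv I x) (at x)"
      using Id[OF x] DERIV_deriv_iff_real_differentiable by blast
    moreover have "(e has_real_derivative e' x) (at x)"
      using ed[of x] x at_within_Icc_at[of a x b] by auto
    ultimately show "((\<lambda>t. I t * e t) has_vector_derivative deriv I x * e x + I x * e' x) (at x)"
      unfolding has_real_derivative_iff_has_vector_derivative[symmetric]
      by (auto intro!: derivative_eq_intros)
  qed (use ab in auto)
  have ie: "(\<lambda>t. I t * e' t) integrable_on {a..b}"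
    by (intro integrable_continuous_interval continuous_intros Ic e'c)
  have "(\<lambda>t. (deriv I t * e t + I t * e' t) - I t * e' t) integrable_on {a..b}"
    using integrable_diff[OF has_integral_integrable[OF ftc] ie] .
  then show di: "(\<lambda>t. deriv I t * e t) integrable_on {a..b}" by simp
  have "integral {a..b} (\<lambda>t. deriv I t * e t + I t * e' t) = integral {a..b} (\<lambda>t. deriv I t * e t) + integral {a..b} (\<lambda>t. I t * e' t)"
    by (rule integral_add[OF di ie])
  then show "integral {a..b} (\<lambda>t. I t * e' t) = - I a * e a - integral {a..b} (\<lambda>t. deriv I t * e t)"
    using integral_unique[OF ftc] eb by simp
qed

definition sqp :: "real \<Rightarrow> real" where "sqp x = (max 0 x)\<^sup>2"

lemma sqp_deriv: "(sqp has_real_derivative 2 * max 0 x) (at x)"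
proof (cases "x = 0")
  case True
  have "((\<lambda>y. (sqp y - sqp 0) / (y - 0)) \<longlongrightarrow> 0) (at 0)"
  proof (rule Lim_null_comparison)
    show "\<forall>\<^sub>F y in at 0. norm ((sqp y - sqp 0) / (y - 0)) \<le> norm y"
      by (auto simp: sqp_def power2_eq_square abs_mult eventually_at_filter max_def divide_simps)
    show "((\<lambda>y::real. norm y) \<longlongrightarrow> 0) (at 0)"
      by (rule tendsto_eq_intros) (auto intro: tendsto_ident_at)
  qed
  then show ?thesis using True by (simp add: has_field_derivative_iff)
next
  case False
  show ?thesis
  proof (cases "x > 0")
    case True
    have "((\<lambda>y. y\<^sup>2) has_real_derivative 2 * x) (at x)"
      by (auto intro!: derivative_eq_intros)
    then have "(sqp has_real_derivative 2 * x) (at x)"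
      by (rule has_field_derivative_transform_within_open[where S="{0<..}"]) (use True in \<open>auto simp: sqp_def\<close>)
    then show ?thesis using True by simp
  next
    case False
    with \<open>x \<noteq> 0\<close> have "x < 0" by simp
    have "((\<lambda>y. 0) has_real_derivative 0) (at x)"
      by (auto intro!: derivative_eq_intros)
    then have "(sqp has_real_derivative 0) (at x)"
      by (rule has_field_derivative_transform_within_open[where S="{..<0}"]) (use \<open>x < 0\<close> in \<open>auto simp: sqp_def\<close>)
    then show ?thesis using \<open>x < 0\<close> by simp
  qed
qed

lemma sqp_cont: "continuous_on S (\<lambda>x. 2 * max 0 (x::real))"
  by (intro continuous_intros)

definition bump :: "real \<Rightarrow> real \<Rightarrow> real \<Rightarrow> real" where
  "bump t0 r t = sqp (r\<^sup>2 - (t - t0)\<^sup>2)"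

definition bump' :: "real \<Rightarrow> real \<Rightarrow> real \<Rightarrow> real" where
  "bump' t0 r t = 2 * max 0 (r\<^sup>2 - (t - t0)\<^sup>2) * (- 2 * (t - t0))"

lemma bump_deriv: "(bump t0 r has_real_derivative bump' t0 r t) (at t)"
  unfolding bump_def[abs_def] bump'_def
  by (rule DERIV_chain2[OF sqp_deriv]) (auto intro!: derivative_eq_intros)

lemma bump'_cont: "continuous_on S (bump' t0 r)"
  unfolding bump'_def[abs_def] by (intro continuous_intros)

lemma bump_nonneg: "bump t0 r t \<ge> 0"
  by (simp add: bump_def sqp_def)

lemma bump_zero: "r \<le> \<bar>t - t0\<bar> \<Longrightarrow> 0 \<le> r \<Longrightarrow> bump t0 r t = 0"
proof -
  assume "r \<le> \<bar>t - t0\<bar>" "0 \<le> r"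
  then have "r\<^sup>2 \<le> (t - t0)\<^sup>2" by (metis abs_le_square_iff abs_of_nonneg)
  then show ?thesis by (simp add: bump_def sqp_def)
qed

lemma bump_inside: "bump t0 r t = (r\<^sup>2 - (t - t0)\<^sup>2)\<^sup>2" if "\<bar>t - t0\<bar> \<le> r"
proof -
  have "(t - t0)\<^sup>2 \<le> r\<^sup>2" using that by (metis abs_le_square_iff abs_ge_zero order_trans abs_of_nonneg)
  then show ?thesis by (simp add: bump_def sqp_def)
qed

lemma bump_integral:
  assumes "r > 0"
  shows "(bump t0 r has_integral (16 * r ^ 5 / 15)) {t0 - r..t0 + r}"
proof -
  define P where "P t = r ^ 4 * (t - t0) - 2 * r\<^sup>2 * (t - t0) ^ 3 / 3 + (t - t0) ^ 5 / 5" for t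
  have "((\<lambda>t. (r\<^sup>2 - (t - t0)\<^sup>2)\<^sup>2) has_integral (P (t0 + r) - P (t0 - r))) {t0 - r..t0 + r}"
  proof (rule fundamental_theorem_of_calculus)
    fix x assume "x \<in> {t0 - r..t0 + r}"
    show "(P has_vector_derivative (r\<^sup>2 - (x - t0)\<^sup>2)\<^sup>2) (at x within {t0 - r..t0 + r})"
      unfolding P_def[abs_def] has_real_derivative_iff_has_vector_derivative[symmetric]
      apply (auto intro!: derivative_eq_intros)
      apply (simp add: power2_eq_square power3_eq_cube eval_nat_numeral)
      apply algebra
      done
  qed (use assms in auto)
  moreover have "P (t0 + r) - P (t0 - r) = 16 * r ^ 5 / 15"
    by (simp add: P_def power2_eq_square power3_eq_cube eval_nat_numeral field_simps)
  ultimately have "((\<lambda>t. (r\<^sup>2 - (t - t0)\<^sup>2)\<^sup>2) has_integral (16 * r ^ 5 / 15)) {t0 - r..t0 + r}"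
    by simp
  then show ?thesis
    by (rule has_integral_eq[rotated]) (auto intro!: bump_inside[symmetric])
qed

lemma caputo_formula:
  fixes a b t beta :: real and z z' :: "real \<Rightarrow> real"
  assumes ab: "a < b" and t: "t \<in> {a..b}"
    and zd: "\<And>\<tau>. \<tau> \<in> {a..b} \<Longrightarrow> (z has_real_derivative z' \<tau>) (at \<tau> within {a..b})"
  shows "caputo a b beta z t = 1 / Gamma (1 - beta) * integral {a..t} (\<lambda>\<tau>. (t - \<tau>) powr (- beta) * z' \<tau>)"
proof -
  have "integral {a..t} (\<lambda>\<tau>. (t - \<tau>) powr (1 - beta - 1) * vector_derivative z (at \<tau> within {a..b}))
      = integral {a..t} (\<lambda>\<tau>. (t - \<tau>) powr (- beta) * z' \<tau>)"
  proof (rule Henstock_Kurzweil_Integration.integral_cong)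
    fix \<tau> assume "\<tau> \<in> {a..t}"
    then have \<tau>: "\<tau> \<in> {a..b}" using t by auto
    have "vector_derivative z (at \<tau> within {a..b}) = z' \<tau>"
      using vector_derivative_within_cbox[of a b \<tau> z "z' \<tau>"] ab \<tau> zd[OF \<tau>]
      by (auto simp: has_real_derivative_iff_has_vector_derivative)
    then show "(t - \<tau>) powr (1 - beta - 1) * vector_derivative z (at \<tau> within {a..b}) = (t - \<tau>) powr (- beta) * z' \<tau>"
      by simp
  qed
  then show ?thesis by (simp add: caputo_def lRLI_def)
qed

lemma kint:
  fixes a t beta :: real and h :: "real \<Rightarrow> real"
  assumes "a \<le> t" "0 < beta" "beta < 1" "continuous_on {a..t} h"
  shows "(\<lambda>\<tau>. (t - \<tau>) powr (- beta) * h \<tau>) integrable_on {a..t}"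
  using kern_left_cont_abs[of a t "- beta" h] assms
  by (auto dest: set_lebesgue_integral_eq_integral(1))

lemma set_int_w:
  fixes a b alpha :: real and c :: "real \<Rightarrow> real"
  assumes ab: "a \<le> b" and alpha: "0 < alpha" and c: "continuous_on {a..b} c"
  shows "set_integrable lborel {a..b} (\<lambda>t. (b - t) powr (alpha - 1) * c t)"
proof -
  have abs: "(\<lambda>t. (b - t) powr (alpha - 1) * c t) absolutely_integrable_on {a..b}"
    using kern_left_cont_abs[of a b "alpha - 1" c] assms by auto
  have "continuous_on {a..<b} (\<lambda>t. (b - t) powr (alpha - 1) * c t)"
    by (intro continuous_intros continuous_on_subset[OF c]) auto
  then have m: "(\<lambda>t. indicator {a..<b} t *\<^sub>R ((b - t) powr (alpha - 1) * c t)) \<in> borel_measurable borel"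
    by (rule borel_measurable_continuous_on_indicator[rotated]) auto
  have eq: "(\<lambda>t. indicator {a..<b} t *\<^sub>R ((b - t) powr (alpha - 1) * c t))
      = (\<lambda>t. indicator {a..b} t *\<^sub>R ((b - t) powr (alpha - 1) * c t))"
    by (auto simp: indicator_def fun_eq_iff)
  show ?thesis
    using abs m unfolding set_integrable_def eq
    by (subst (asm) integrable_completion) auto
qed

theorem mainTheorem10:
  fixes a b alpha beta yb :: real
    and F F1 F2 F3 :: "real \<Rightarrow> real \<Rightarrow> real \<Rightarrow> real"
    and y :: "real \<Rightarrow> real"
  assumes ab: "a < b"
    and alpha: "0 < alpha" "alpha < 1"
    and beta: "0 < beta" "beta < 1"
    and F_deriv: "\<And>t u v. t \<in> {a..b} \<Longrightarrow>
        ((\<lambda>(t, u, v). F t u v) has_derivative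
           (\<lambda>(dt, du, dv). F1 t u v * dt + F2 t u v * du + F3 t u v * dv))
        (at (t, u, v) within {a..b} \<times> UNIV)"
    and F_C1: "continuous_on ({a..b} \<times> UNIV) (\<lambda>(t, u, v). F1 t u v)"
              "continuous_on ({a..b} \<times> UNIV) (\<lambda>(t, u, v). F2 t u v)"
              "continuous_on ({a..b} \<times> UNIV) (\<lambda>(t, u, v). F3 t u v)"
    and y_adm: "admissible a b beta yb y"
    and y_min: "\<And>z. admissible a b beta yb z \<Longrightarrow> Jfun a b alpha beta F y \<le> Jfun a b alpha beta F z"
    and cont2: "continuous_on {a<..<b}
        (\<lambda>t. (b - t) powr (alpha - 1) * F2 t (y t) (caputo a b beta y t))"
    and D_exists: "\<And>t. t \<in> {a<..<b} \<Longrightarrow>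
        rRLI b (1 - beta) (\<lambda>\<tau>. (b - \<tau>) powr (alpha - 1) * F3 \<tau> (y \<tau>) (caputo a b beta y \<tau>))
          differentiable (at t)"
    and D_cont: "continuous_on {a<..<b}
        (rRLD b beta (\<lambda>\<tau>. (b - \<tau>) powr (alpha - 1) * F3 \<tau> (y \<tau>) (caputo a b beta y \<tau>)))"
    and I_ac: "abs_continuous_on a b
        (rRLI b (1 - beta) (\<lambda>\<tau>. (b - \<tau>) powr (alpha - 1) * F3 \<tau> (y \<tau>) (caputo a b beta y \<tau>)))"
    and alt: "(integrable (lebesgue_on {p :: real \<times> real. a \<le> snd p \<and> snd p < fst p \<and> fst p \<le> b})
                 (\<lambda>(t, \<tau>). ((t - \<tau>) powr (- beta) / Gamma (1 - beta))\<^sup>2)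
             \<and> (\<lambda>\<tau>. (b - \<tau>) powr (alpha - 1) * F3 \<tau> (y \<tau>) (caputo a b beta y \<tau>))
                 \<in> borel_measurable (lebesgue_on {a..b})
             \<and> integrable (lebesgue_on {a..b})
                 (\<lambda>\<tau>. ((b - \<tau>) powr (alpha - 1) * F3 \<tau> (y \<tau>) (caputo a b beta y \<tau>))\<^sup>2))
           \<or> (\<exists>G. continuous_on {a..b} G \<and>
                 (\<forall>\<tau>\<in>{a..<b}. G \<tau> = (b - \<tau>) powr (alpha - 1) * F3 \<tau> (y \<tau>) (caputo a b beta y \<tau>)))"
  shows "(\<forall>t\<in>{a<..<b}.
            (b - t) powr (alpha - 1) * F2 t (y t) (caputo a b beta y t)
            + rRLD b beta (\<lambda>\<tau>. (b - \<tau>) powr (alpha - 1) * F3 \<tau> (y \<tau>) (caputo a b beta y \<tau>)) t = 0)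
         \<and> rRLI b (1 - beta) (\<lambda>\<tau>. (b - \<tau>) powr (alpha - 1) * F3 \<tau> (y \<tau>) (caputo a b beta y \<tau>)) a = 0
         \<and> integral {a..b} (\<lambda>\<tau>. (\<tau> - a) powr (- beta) * ((b - \<tau>) powr (alpha - 1) * F3 \<tau> (y \<tau>) (caputo a b beta y \<tau>))) = 0"
proof -
  define yc where "yc = caputo a b beta y"
  define w where "w t = (b - t) powr (alpha - 1)" for t
  define g where "g = (\<lambda>\<tau>. (b - \<tau>) powr (alpha - 1) * F3 \<tau> (y \<tau>) (caputo a b beta y \<tau>))"
  define Ig where "Ig = rRLI b (1 - beta) g"
  define Dg where "Dg = rRLD b beta g"
  define E where "E t = (b - t) powr (alpha - 1) * F2 t (y t) (caputo a b beta y t) + Dg t" for t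
  define G1 where "G1 = Gamma (1 - beta)"
  have G1: "G1 > 0" unfolding G1_def using beta by auto
  obtain y' where y'c: "continuous_on {a..b} y'"
    and y'd: "\<And>t. t \<in> {a..b} \<Longrightarrow> (y has_real_derivative y' t) (at t within {a..b})"
    using y_adm unfolding admissible_def C1_on_def by blast
  have ycc: "continuous_on {a..b} yc" and yb: "y b = yb"
    using y_adm unfolding admissible_def yc_def by auto
  have yc_cont: "continuous_on {a..b} y"
    unfolding continuous_on_eq_continuous_within using DERIV_continuous[OF y'd] by blast
  have pc: "continuous_on {a..b} (\<lambda>t. Fi t (y t) (yc t))"
    if Fi: "continuous_on ({a..b} \<times> UNIV) (\<lambda>(t, u, v). Fi t u v)" for Fi :: "real \<Rightarrow> real \<Rightarrow> real \<Rightarrow> real"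
  proof -
    have "continuous_on {a..b} ((\<lambda>(t, u, v). Fi t u v) \<circ> (\<lambda>t. (t, y t, yc t)))"
      by (rule continuous_on_compose[OF _ continuous_on_subset[OF Fi]])
         (auto intro!: continuous_intros yc_cont ycc)
    then show ?thesis by (simp add: comp_def)
  qed
  have F2c: "continuous_on {a..b} (\<lambda>t. F2 t (y t) (yc t))" by (rule pc[OF F_C1(2)])
  have F3c: "continuous_on {a..b} (\<lambda>t. F3 t (y t) (yc t))" by (rule pc[OF F_C1(3)])
  have g_eq: "g = (\<lambda>t. w t * F3 t (y t) (yc t))" by (simp add: g_def w_def yc_def)
  have g_si: "set_integrable lborel {a..b} g"
    unfolding g_eq w_def by (rule set_int_w[OF _ alpha(1) F3c]) (use ab in auto)
  have Ig_c: "continuous_on {a..b} Ig"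
  proof -
    have ac: "abs_continuous_on a b Ig" using I_ac unfolding Ig_def g_def .
    show ?thesis
      unfolding continuous_on_iff
    proof (intro ballI allI impI)
      fix x e :: real assume x: "x \<in> {a..b}" and e: "e > 0"
      have "\<exists>d>0. \<forall>(n::nat) (s::nat \<Rightarrow> real) (t::nat \<Rightarrow> real).
       (\<forall>i<n. a \<le> s i \<and> s i \<le> t i \<and> t i \<le> b) \<and>
       (\<forall>i<n. \<forall>j<n. i \<noteq> j \<longrightarrow> t i \<le> s j \<or> t j \<le> s i) \<and>
       (\<Sum>i<n. t i - s i) < d
       \<longrightarrow> (\<Sum>i<n. \<bar>Ig (t i) - Ig (s i)\<bar>) < e"
        using ac e unfolding abs_continuous_on_def by simp
      then obtain d where d: "d > 0" and dd: "\<forall>(n::nat) (s::nat \<Rightarrow> real) (t::nat \<Rightarrow> real).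
       (\<forall>i<n. a \<le> s i \<and> s i \<le> t i \<and> t i \<le> b) \<and>
       (\<forall>i<n. \<forall>j<n. i \<noteq> j \<longrightarrow> t i \<le> s j \<or> t j \<le> s i) \<and>
       (\<Sum>i<n. t i - s i) < d
       \<longrightarrow> (\<Sum>i<n. \<bar>Ig (t i) - Ig (s i)\<bar>) < e"
        by blast
      show "\<exists>d>0. \<forall>x'\<in>{a..b}. dist x' x < d \<longrightarrow> dist (Ig x') (Ig x) < e"
      proof (intro exI conjI ballI impI)
        show "d > 0" by fact
        fix x' assume x': "x' \<in> {a..b}" and dx: "dist x' x < d"
        have "(\<Sum>i<(1::nat). \<bar>Ig ((\<lambda>_. max x x') i) - Ig ((\<lambda>_. min x x') i)\<bar>) < e"
          by (rule dd[rule_format]) (use x x' dx in \<open>auto simp: dist_real_def\<close>)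
        then show "dist (Ig x') (Ig x) < e"
          by (cases "x \<le> x'") (auto simp: dist_real_def max_def min_def abs_minus_commute)
      qed
    qed
  qed
  have Ig_d: "\<And>t. t \<in> {a<..<b} \<Longrightarrow> Ig differentiable (at t)"
    using D_exists unfolding Ig_def g_def .
  have var: "(\<lambda>t. E t * e t) integrable_on {a..b} \<and> integral {a..b} (\<lambda>t. E t * e t) = Ig a * e a"
    if ed: "\<And>t. t \<in> {a..b} \<Longrightarrow> (e has_real_derivative e' t) (at t within {a..b})"
      and e'c: "continuous_on {a..b} e'" and eb: "e b = 0" for e e'
  proof -
    define d where "d = caputo a b beta e"
    have ec: "continuous_on {a..b} e"
      unfolding continuous_on_eq_continuous_within using DERIV_continuous[OF ed] by blast
    have d_form: "d t = 1 / G1 * integral {a..t} (\<lambda>\<tau>. (t - \<tau>) powr (- beta) * e' \<tau>)" if "t \<in> {a..b}" for t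
      unfolding d_def G1_def by (rule caputo_formula[OF ab that ed])
    have yc_form: "yc t = 1 / G1 * integral {a..t} (\<lambda>\<tau>. (t - \<tau>) powr (- beta) * y' \<tau>)" if "t \<in> {a..b}" for t
      unfolding yc_def G1_def by (rule caputo_formula[OF ab that y'd])
    have dc: "continuous_on {a..b} d"
    proof -
      have "continuous_on {a..b} (\<lambda>t. 1 / G1 * integral {a..t} (\<lambda>\<tau>. (t - \<tau>) powr (- beta) * e' \<tau>))"
        by (intro continuous_intros frac_int_cont e'c beta) (use ab in auto)
      then show ?thesis by (rule continuous_on_eq) (simp add: d_form)
    qed
    have z_cap: "caputo a b beta (\<lambda>t. y t + s * e t) t = yc t + s * d t" if t: "t \<in> {a..b}" for s t
    proof -
      have zd: "((\<lambda>t. y t + s * e t) has_real_derivative y' \<tau> + s * e' \<tau>) (at \<tau> within {a..b})"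
        if "\<tau> \<in> {a..b}" for \<tau>
        using y'd[OF that] ed[OF that] by (auto intro!: derivative_eq_intros)
      have i1: "(\<lambda>\<tau>. (t - \<tau>) powr (- beta) * y' \<tau>) integrable_on {a..t}"
        by (rule kint) (use t beta in \<open>auto intro: continuous_on_subset[OF y'c]\<close>)
      have i2: "(\<lambda>\<tau>. (t - \<tau>) powr (- beta) * e' \<tau>) integrable_on {a..t}"
        by (rule kint) (use t beta in \<open>auto intro: continuous_on_subset[OF e'c]\<close>)
      have "integral {a..t} (\<lambda>\<tau>. (t - \<tau>) powr (- beta) * (y' \<tau> + s * e' \<tau>))
          = integral {a..t} (\<lambda>\<tau>. (t - \<tau>) powr (- beta) * y' \<tau> + s * ((t - \<tau>) powr (- beta) * e' \<tau>))"
        by (simp add: algebra_simps)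
      also have "\<dots> = integral {a..t} (\<lambda>\<tau>. (t - \<tau>) powr (- beta) * y' \<tau>) + s * integral {a..t} (\<lambda>\<tau>. (t - \<tau>) powr (- beta) * e' \<tau>)"
        using integral_add[OF i1 integrable_on_cmult_left[OF i2, of s]] by simp
      finally show ?thesis
        using caputo_formula[OF ab t zd, of beta] d_form[OF t] yc_form[OF t]
        by (simp add: G1_def algebra_simps)
    qed
    have adm: "admissible a b beta yb (\<lambda>t. y t + s * e t)" for s
      unfolding admissible_def
    proof (intro conjI)
      show "C1_on a b (\<lambda>t. y t + s * e t)"
        unfolding C1_on_def
        by (rule exI[of _ "\<lambda>t. y' t + s * e' t"])
           (auto intro!: continuous_intros y'c e'c derivative_eq_intros y'd ed)
      have "continuous_on {a..b} (\<lambda>t. yc t + s * d t)" by (intro continuous_intros ycc dc)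
      then show "continuous_on {a..b} (caputo a b beta (\<lambda>t. y t + s * e t))"
        by (rule continuous_on_eq) (simp add: z_cap)
      show "y b + s * e b = yb" using yb eb by simp
    qed
    have J_eq: "Jfun a b alpha beta F (\<lambda>t. y t + s * e t)
        = 1 / Gamma alpha * integral {a..b} (\<lambda>t. (b - t) powr (alpha - 1) * F t (y t + s * e t) (yc t + s * d t))" for s
      unfolding Jfun_def lRLI_def
      by (rule arg_cong[where f = "\<lambda>x. 1 / Gamma alpha * x"], rule Henstock_Kurzweil_Integration.integral_cong)
         (simp add: z_cap)
    have J0: "Jfun a b alpha beta F y
        = 1 / Gamma alpha * integral {a..b} (\<lambda>t. (b - t) powr (alpha - 1) * F t (y t) (yc t))"
      unfolding Jfun_def lRLI_def yc_def by simp
    have Ga: "Gamma alpha > 0" using alpha by auto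
    have minv: "integral {a..b} (\<lambda>t. (b - t) powr (alpha - 1) * F t (y t) (yc t))
        \<le> integral {a..b} (\<lambda>t. (b - t) powr (alpha - 1) * F t (y t + s * e t) (yc t + s * d t))" for s
      by (rule mult_left_le_imp_le[OF y_min[OF adm[of s], unfolded J_eq J0]]) (use Ga in simp)
    have fv: "integral {a..b} (\<lambda>t. (b - t) powr (alpha - 1) *
           (F2 t (y t) (yc t) * e t + F3 t (y t) (yc t) * d t)) = 0"
      by (rule first_var[OF ab alpha(1) F_deriv F_C1(2) F_C1(3) yc_cont ycc ec dc minv])
    have F2e: "continuous_on {a..b} (\<lambda>t. F2 t (y t) (yc t) * e t)" by (intro continuous_intros F2c ec)
    have F3d: "continuous_on {a..b} (\<lambda>t. F3 t (y t) (yc t) * d t)" by (intro continuous_intros F3c dc)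
    have Ai: "(\<lambda>t. w t * (F2 t (y t) (yc t) * e t)) integrable_on {a..b}"
      unfolding w_def by (rule w_cont_int[OF _ alpha(1) F2e]) (use ab in auto)
    have Bi: "(\<lambda>t. w t * (F3 t (y t) (yc t) * d t)) integrable_on {a..b}"
      unfolding w_def by (rule w_cont_int[OF _ alpha(1) F3d]) (use ab in auto)
    have AB: "integral {a..b} (\<lambda>t. w t * (F2 t (y t) (yc t) * e t)) + integral {a..b} (\<lambda>t. w t * (F3 t (y t) (yc t) * d t)) = 0"
      using fv integral_add[OF Ai Bi] unfolding w_def by (simp add: distrib_left)
    have B: "integral {a..b} (\<lambda>t. w t * (F3 t (y t) (yc t) * d t)) = integral {a..b} (\<lambda>\<tau>. Ig \<tau> * e' \<tau>)"
    proof -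
      have "integral {a..b} (\<lambda>t. w t * (F3 t (y t) (yc t) * d t))
          = integral {a..b} (\<lambda>t. 1 / G1 * (g t * integral {a..t} (\<lambda>\<tau>. (t - \<tau>) powr (- beta) * e' \<tau>)))"
        by (rule Henstock_Kurzweil_Integration.integral_cong) (simp add: d_form g_eq)
      also have "\<dots> = 1 / G1 * integral {a..b} (\<lambda>t. g t * integral {a..t} (\<lambda>\<tau>. (t - \<tau>) powr (- beta) * e' \<tau>))"
        by simp
      also have "integral {a..b} (\<lambda>t. g t * integral {a..t} (\<lambda>\<tau>. (t - \<tau>) powr (- beta) * e' \<tau>))
          = integral {a..b} (\<lambda>\<tau>. e' \<tau> * integral {\<tau>..b} (\<lambda>t. (t - \<tau>) powr (- beta) * g t))"
        by (rule fubini_frac[OF _ beta g_si e'c]) (use ab in auto)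
      also have "1 / G1 * \<dots> = integral {a..b} (\<lambda>\<tau>. Ig \<tau> * e' \<tau>)"
        by (simp add: Ig_def rRLI_def G1_def mult_ac)
      finally show ?thesis .
    qed
    have IBP1: "(\<lambda>t. deriv Ig t * e t) integrable_on {a..b}"
      by (rule ibp_frac(1)[OF ab Ig_c]) (use Ig_d ed e'c eb in auto)
    have IBP2: "integral {a..b} (\<lambda>t. Ig t * e' t) = - Ig a * e a - integral {a..b} (\<lambda>t. deriv Ig t * e t)"
      by (rule ibp_frac(2)[OF ab Ig_c]) (use Ig_d ed e'c eb in auto)
    have Dg_eq: "Dg t = - deriv Ig t" for t
      by (simp add: Dg_def Ig_def rRLD_def)
    have E_eq: "E t * e t = w t * (F2 t (y t) (yc t) * e t) + (- (deriv Ig t * e t))" for t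
      by (simp add: E_def Dg_eq w_def yc_def algebra_simps)
    have Ei: "(\<lambda>t. E t * e t) integrable_on {a..b}"
      unfolding E_eq by (intro integrable_add Ai integrable_neg IBP1)
    have "integral {a..b} (\<lambda>t. E t * e t)
        = integral {a..b} (\<lambda>t. w t * (F2 t (y t) (yc t) * e t)) - integral {a..b} (\<lambda>t. deriv Ig t * e t)"
      unfolding E_eq using integral_add[OF Ai integrable_neg[OF IBP1]] by (simp add: integral_neg)
    also have "\<dots> = Ig a * e a"
      using AB B IBP2 by simp
    finally show ?thesis using Ei by simp
  qed
  have Ec: "continuous_on {a<..<b} E"
    unfolding E_def[abs_def] Dg_def g_def by (intro continuous_on_add cont2 D_cont)
  have EL: "E t0 = 0" if t0: "t0 \<in> {a<..<b}" for t0
  proof (rule ccontr)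
    assume ne: "E t0 \<noteq> 0"
    define \<sigma> where "\<sigma> = sgn (E t0)"
    have \<sigma>1: "\<bar>\<sigma>\<bar> = 1" using ne by (simp add: \<sigma>_def abs_sgn)
    have \<sigma>E: "\<sigma> * E t0 = \<bar>E t0\<bar>" by (simp add: \<sigma>_def sgn_mult_self_eq abs_sgn sgn_abs mult.commute) 
    define m where "m = \<bar>E t0\<bar> / 2"
    have m: "m > 0" using ne by (simp add: m_def)
    obtain \<delta> where \<delta>: "\<delta> > 0" and \<delta>E: "\<And>x. x \<in> {a<..<b} \<Longrightarrow> dist x t0 < \<delta> \<Longrightarrow> dist (E x) (E t0) < m"
      using Ec t0 m unfolding continuous_on_iff by meson
    define r where "r = min (\<delta> / 2) (min ((t0 - a) / 2) ((b - t0) / 2))"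
    have r: "r > 0" using \<delta> t0 by (simp add: r_def)
    have r1: "r \<le> \<delta> / 2" "r \<le> (t0 - a) / 2" "r \<le> (b - t0) / 2"
      unfolding r_def by linarith+
    have S_sub: "{t0 - r..t0 + r} \<subseteq> {a<..<b}" using t0 r r1 by auto
    have pos: "\<sigma> * E x \<ge> m" if x: "x \<in> {t0 - r..t0 + r}" for x
    proof -
      have "dist (E x) (E t0) < m"
        by (rule \<delta>E) (use x S_sub \<delta> r r1 in \<open>auto simp: dist_real_def\<close>)
      then have d: "\<bar>E x - E t0\<bar> < m" by (simp add: dist_real_def)
      have "\<bar>\<sigma> * (E x - E t0)\<bar> \<le> \<bar>E x - E t0\<bar>" using \<sigma>1 by (simp add: abs_mult)
      then have "\<sigma> * E x \<ge> \<sigma> * E t0 - \<bar>E x - E t0\<bar>"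
        by (simp add: right_diff_distrib abs_le_iff)
      then show ?thesis using \<sigma>E d by (simp add: m_def)
    qed
    have ed: "(bump t0 r has_real_derivative bump' t0 r t) (at t within {a..b})" for t
      by (rule has_field_derivative_at_within[OF bump_deriv])
    have eb: "bump t0 r b = 0" using t0 r r1 by (intro bump_zero) auto
    have ea: "bump t0 r a = 0" using t0 r r1 by (intro bump_zero) auto
    from var[of "bump t0 r" "bump' t0 r", OF ed bump'_cont eb]
    have Ei: "(\<lambda>t. E t * bump t0 r t) integrable_on {a..b}"
      and E0: "integral {a..b} (\<lambda>t. E t * bump t0 r t) = 0" using ea by auto
    have S_sub': "{t0 - r..t0 + r} \<subseteq> {a..b}" using t0 r r1 by auto
    have "integral {a..b} (\<lambda>t. E t * bump t0 r t)
        = integral {a..b} (\<lambda>t. if t \<in> {t0 - r..t0 + r} then E t * bump t0 r t else 0)"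
    proof (rule Henstock_Kurzweil_Integration.integral_cong)
      fix t assume "t \<in> {a..b}"
      show "E t * bump t0 r t = (if t \<in> {t0 - r..t0 + r} then E t * bump t0 r t else 0)"
        using r by (auto simp: bump_zero)
    qed
    also have "\<dots> = integral {t0 - r..t0 + r} (\<lambda>t. E t * bump t0 r t)"
      using integral_restrict_Int[of "{a..b}" "{t0 - r..t0 + r}" "\<lambda>t. E t * bump t0 r t"]
      unfolding Int_absorb2[OF S_sub'] .
    finally have ES0: "integral {t0 - r..t0 + r} (\<lambda>t. E t * bump t0 r t) = 0" using E0 by simp
    have ESi: "(\<lambda>t. E t * bump t0 r t) integrable_on {t0 - r..t0 + r}"
      by (rule integrable_on_subinterval[OF Ei S_sub'])
    have BI: "(bump t0 r has_integral 16 * r ^ 5 / 15) {t0 - r..t0 + r}" by (rule bump_integral[OF r])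
    have "integral {t0 - r..t0 + r} (\<lambda>t. m * bump t0 r t) \<le> integral {t0 - r..t0 + r} (\<lambda>t. \<sigma> * (E t * bump t0 r t))"
    proof (rule integral_le)
      show "(\<lambda>t. m * bump t0 r t) integrable_on {t0 - r..t0 + r}"
        using has_integral_mult_right[OF BI, of m] by (auto simp: integrable_on_def)
      show "(\<lambda>t. \<sigma> * (E t * bump t0 r t)) integrable_on {t0 - r..t0 + r}"
        using integrable_on_cmult_left[OF ESi, of \<sigma>] by simp
      fix x assume "x \<in> {t0 - r..t0 + r}"
      then show "m * bump t0 r x \<le> \<sigma> * (E x * bump t0 r x)"
        using pos[of x] bump_nonneg[of t0 r x] by (simp add: mult_right_mono mult.assoc[symmetric])
    qed
    also have "\<dots> = \<sigma> * integral {t0 - r..t0 + r} (\<lambda>t. E t * bump t0 r t)" by simp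
    also have "\<dots> = 0" using ES0 by simp
    finally have "m * (16 * r ^ 5 / 15) \<le> 0"
      using integral_unique[OF BI] by simp
    moreover have "m * (16 * r ^ 5 / 15) > 0" using m r by simp
    ultimately show False by simp
  qed
  have Ia: "Ig a = 0"
  proof -
    have ed: "((\<lambda>t. b - t) has_real_derivative -1) (at t within {a..b})" for t
      by (auto intro!: derivative_eq_intros)
    from var[of "\<lambda>t. b - t" "\<lambda>_. -1", OF ed]
    have "integral {a..b} (\<lambda>t. E t * (b - t)) = Ig a * (b - a)" by auto
    moreover have "integral {a..b} (\<lambda>t. E t * (b - t)) = integral {a..b} (\<lambda>t. 0)"
      by (rule integral_spike[of "{a, b}"]) (auto simp: EL)
    ultimately show ?thesis using ab by simp
  qed
  have Iint: "integral {a..b} (\<lambda>\<tau>. (\<tau> - a) powr (- beta) * g \<tau>) = 0"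
    using Ia G1 by (simp add: Ig_def rRLI_def G1_def)
  show ?thesis
    using EL Ia Iint unfolding E_def Dg_def Ig_def g_def by auto
qed

end
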